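(* Let $R$ be a ring and let $I,J$ be ideals of $R$ with $I\cap J=0$. Let $x\in I$ and $y\in J$. Then for all $\theta,\theta'\in\widehat\Theta(R)$, $\theta(x)\cdot\theta'(y)=0$.
   Context: Rings are commutative with unit. $\widehat\Theta(R)$ is the free monoid generated by the set $\mathrm{Der}(R)$ of all derivations of $R$; a word $\delta_1\cdots\delta_n$ acts on $R$ as the composition $\delta_1\circ\cdots\circ\delta_n$ (the empty word acting as the identity). *)

theory Defs
  imports Main
begin

definition is_ideal :: "'a::comm_ring_1 set \<Rightarrow> bool" where
  "is_ideal I \<longleftrightarrow> 0 \<in> I \<and> (\<forall>a\<in>I. \<forall>b\<in>I. a + b \<in> I) \<and> (\<forall>a\<in>I. - a \<in> I)
     \<and> (\<forall>r a. a \<in> I \<longrightarrow> r * a \<in> I)"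

definition Der :: "('a::comm_ring_1 \<Rightarrow> 'a) set" where
  "Der = {d. (\<forall>a b. d (a + b) = d a + d b) \<and> (\<forall>a b. d (a * b) = a * d b + d a * b)}"

text \<open>Elements of the free monoid on Der(R) are lists (words) of derivations;
  the word d1 ... dn acts as d1 o ... o dn, the empty word as the identity.\<close>
definition Theta_hat :: "('a::comm_ring_1 \<Rightarrow> 'a) list set" where
  "Theta_hat = {ds. set ds \<subseteq> Der}"

definition word_act :: "('a \<Rightarrow> 'a) list \<Rightarrow> 'a \<Rightarrow> 'a" where
  "word_act ds = foldr (\<circ>) ds id"

end

theory Submission
  imports Defs
begin

lemma der0: "d \<in> Der \<Longrightarrow> d 0 = (0::'a::comm_ring_1)"
proof -
  assume "d \<in> Der"
  then have "d (0 + 0) = d 0 + d 0" unfolding Der_def by blast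
  then show ?thesis by simp
qed

lemma wa_nil[simp]: "word_act [] z = z" by (simp add: word_act_def)
lemma wa_cons[simp]: "word_act (d#ds) z = d (word_act ds z)" by (simp add: word_act_def)

lemma der_swap:
  assumes "d \<in> Der" and "(u::'a::comm_ring_1) * v = 0"
  shows "d u * v = - (u * d v)"
proof -
  have "d (u * v) = u * d v + d u * v" using assms(1) by (simp add: Der_def)
  then have "0 = u * d v + d u * v" using assms der0 by metis
  then show ?thesis by (simp add: eq_neg_iff_add_eq_0 add.commute)
qed

definition Hn :: "'a::comm_ring_1 \<Rightarrow> 'a \<Rightarrow> nat \<Rightarrow> bool" where
  "Hn x y n \<longleftrightarrow> (\<forall>a b. set a \<subseteq> Der \<longrightarrow> set b \<subseteq> Der \<longrightarrow> length a + length b = n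
      \<longrightarrow> word_act a x * word_act b y = 0)"

lemma inI:
  assumes I: "is_ideal I" and x: "x \<in> I" and H: "Hn x y n"
  shows "set a \<subseteq> Der \<Longrightarrow> set b \<subseteq> Der \<Longrightarrow> length a + length b = Suc n
      \<Longrightarrow> word_act a x * word_act b y \<in> I"
proof (induction a arbitrary: b)
  case Nil
  have "word_act b y * x \<in> I" using I x unfolding is_ideal_def by blast
  then show ?case by (simp add: mult.commute)
next
  case (Cons d a)
  have z: "word_act a x * word_act b y = 0" using H Cons.prems by (simp add: Hn_def)
  have "word_act (d#a) x * word_act b y = - (word_act a x * word_act (d#b) y)"
    using der_swap[OF _ z] Cons.prems by simp
  moreover have "word_act a x * word_act (d#b) y \<in> I"
    using Cons.IH[of "d#b"] Cons.prems by simp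
  ultimately show ?case using I by (simp add: is_ideal_def)
qed

lemma inJ:
  assumes J: "is_ideal J" and y: "y \<in> J" and H: "Hn x y n"
  shows "set a \<subseteq> Der \<Longrightarrow> set b \<subseteq> Der \<Longrightarrow> length a + length b = Suc n
      \<Longrightarrow> word_act a x * word_act b y \<in> J"
proof (induction b arbitrary: a)
  case Nil
  then show ?case using J y unfolding is_ideal_def by simp
next
  case (Cons d b)
  have z: "word_act a x * word_act b y = 0" using H Cons.prems by (simp add: Hn_def)
  have "word_act a x * word_act (d#b) y = - (word_act (d#a) x * word_act b y)"
    using der_swap[OF _ z] Cons.prems by simp
  moreover have "word_act (d#a) x * word_act b y \<in> J"
    using Cons.IH[of "d#a"] Cons.prems by simp
  ultimately show ?case using J by (simp add: is_ideal_def)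
qed

theorem lemmaA14:
  fixes I J :: "'a::comm_ring_1 set" and x y :: 'a
  assumes "is_ideal I" and "is_ideal J" and "I \<inter> J = {0}"
    and "x \<in> I" and "y \<in> J"
  shows "\<forall>\<theta>\<in>Theta_hat. \<forall>\<theta>'\<in>Theta_hat. word_act \<theta> x * word_act \<theta>' y = 0"
proof -
  have "Hn x y n" for n
  proof (induction n)
    case 0
    have "y * x \<in> I" using assms(1,4) unfolding is_ideal_def by blast
    hence "x * y \<in> I" by (simp add: mult.commute)
    moreover have "x * y \<in> J" using assms(2,5) unfolding is_ideal_def by blast
    ultimately show ?case using assms(3) by (auto simp: Hn_def)
  next
    case (Suc n)
    show ?case unfolding Hn_def
    proof (intro allI impI)
      fix a b :: "('a \<Rightarrow> 'a) list" assume h: "set a \<subseteq> Der" "set b \<subseteq> Der" "length a + length b = Suc n"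
      have "word_act a x * word_act b y \<in> I" using inI[OF assms(1,4) Suc h] .
      moreover have "word_act a x * word_act b y \<in> J" using inJ[OF assms(2,5) Suc h] .
      ultimately show "word_act a x * word_act b y = 0" using assms(3) by blast
    qed
  qed
  then show ?thesis by (auto simp: Hn_def Theta_hat_def)
qed

end
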